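(* Let $0<s_1<s_2$, $0<\epsilon<\min(s_1,s_2-s_1)$ and $M>\epsilon$ satisfy \[ \frac{2}{s_2+\epsilon}+\frac{1}{2s_2+\epsilon}+\frac{1}{2s_1+\epsilon}>\frac{\sqrt3}{s_1-\epsilon}+\frac1{s_1}+\frac1{M-\epsilon}. \] Let $(r_1,r_2,r_3)\in(0,\epsilon)\times(s_2-\epsilon,s_2)\times(s_2,s_2+\epsilon)$ and $(\ell_1,\ell_2,\ell_3)\in(s_1-\epsilon,s_1)\times(s_1,s_1+\epsilon)\times(M,\infty)$, and suppose $r_3\ge\varphi(r_1,r_2)$ and $\ell_3\ge\varphi(\ell_1,\ell_2)$. Then \[ c(r_1,r_2,r_3)+c(\ell_1,\ell_2,\ell_3)>c(\ell_1,r_2,r_3)+c(r_1,\ell_2,\ell_3). \]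
   Context: For $r_1,r_2,r_3\ge 0$ and $(\alpha,\beta)\in\mathbb T^2$ let \[C(r_1,r_2,r_3,\alpha,\beta)=\frac{1}{\sqrt{r_1^2+r_2^2-2r_1r_2\cos\alpha}}+\frac{1}{\sqrt{r_1^2+r_3^2-2r_1r_3\cos\beta}}+\frac{1}{\sqrt{r_2^2+r_3^2-2r_2r_3\cos(\alpha-\beta)}}\] (value $+\infty$ if a denominator vanishes), and let the radial cost be $c(r_1,r_2,r_3)=\min_{(\alpha,\beta)\in\mathbb T^2}C(r_1,r_2,r_3,\alpha,\beta)$. For $0<r_1<r_2$, $\varphi(r_1,r_2)=\dfrac{5r_1r_2+r_2^2+(r_1+r_2)\sqrt{r_2^2+12r_1r_2-4r_1^2}}{2(r_2-r_1)}$; the condition $r_3\ge\varphi(r_1,r_2)$ (for $r_3>0$) is equivalent to $r_2(r_3-r_1)^3-r_1(r_3+r_2)^3-r_3(r_1+r_2)^3\ge0$. *)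

theory Defs
  imports "HOL-Analysis.Analysis" "HOL-Library.Extended_Real"
begin

text \<open>Reciprocal distance between points at radii a, b with angle difference theta;
  value +infinity when the distance vanishes.\<close>
definition inv_dist :: "real \<Rightarrow> real \<Rightarrow> real \<Rightarrow> ereal" where
  "inv_dist a b \<theta> =
     (let d = sqrt (a\<^sup>2 + b\<^sup>2 - 2 * a * b * cos \<theta>)
      in if d = 0 then PInfty else ereal (1 / d))"

definition Ccost :: "real \<Rightarrow> real \<Rightarrow> real \<Rightarrow> real \<Rightarrow> real \<Rightarrow> ereal" where
  "Ccost r1 r2 r3 \<alpha> \<beta> = inv_dist r1 r2 \<alpha> + inv_dist r1 r3 \<beta> + inv_dist r2 r3 (\<alpha> - \<beta>)"

text \<open>Radial cost: minimum over the torus; angles are taken as reals (cos is 2pi-periodic).\<close>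
definition rcost :: "real \<Rightarrow> real \<Rightarrow> real \<Rightarrow> ereal" where
  "rcost r1 r2 r3 = (INF p \<in> (UNIV :: (real \<times> real) set). Ccost r1 r2 r3 (fst p) (snd p))"

definition phi :: "real \<Rightarrow> real \<Rightarrow> real" where
  "phi r1 r2 = (5 * r1 * r2 + r2\<^sup>2 + (r1 + r2) * sqrt (r2\<^sup>2 + 12 * r1 * r2 - 4 * r1\<^sup>2))
               / (2 * (r2 - r1))"

end

theory Submission
  imports Defs
begin

lemma tangent_inv:
  fixes t a :: real assumes "t > 0" "a > 0"
  shows "(3*a^2 - t^2)/(2*a^3) \<le> 1/t"
proof -
  have "(t-a)^2*(t+2*a) \<ge> 0" using assms by simp
  moreover have "(t-a)^2*(t+2*a) = 2*a^3 - (3*a^2-t^2)*t" by algebra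
  ultimately have "(3*a^2 - t^2) * t \<le> 2*a^3" by linarith
  then show ?thesis using assms by (simp add: field_simps)
qed

lemma sqrt3_bounds: "1.732 \<le> sqrt 3" "sqrt 3 \<le> 1.7321"
proof -
  show "1.732 \<le> sqrt 3" by (rule real_le_rsqrt) (simp add: power2_eq_square)
  have "sqrt 3 \<le> sqrt (1.7321^2)" by (simp add: power2_eq_square)
  then show "sqrt 3 \<le> 1.7321" by simp
qed

lemma sq_lb: fixes x y c :: real assumes "0 \<le> x" "0 \<le> y"
  shows "x^2 + y^2 - 2*x*y*c \<ge> (y-x)^2 + 2*(x*y*(1-c))"
  by (simp add: algebra_simps power2_eq_square)

lemma core:
  fixes r1 r2 r3 S e \<alpha> \<beta> :: real
  assumes "0<r1" "r1<e" "S-e<r2" "r2<S" "S<r3" "r3<S+e" "0<e" "19*e < S"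
  shows "2/(S+e) + 1/(2*S+e) \<le> 1/sqrt(r1\<^sup>2+r2\<^sup>2-2*r1*r2*cos \<alpha>)
     + 1/sqrt(r1\<^sup>2+r3\<^sup>2-2*r1*r3*cos \<beta>) + 1/sqrt(r2\<^sup>2+r3\<^sup>2-2*r2*r3*cos (\<alpha>-\<beta>))"
proof -
  define a where "a = S + e"
  define X where "X = r1\<^sup>2+r2\<^sup>2-2*r1*r2*cos \<alpha>"
  define Y where "Y = r1\<^sup>2+r3\<^sup>2-2*r1*r3*cos \<beta>"
  define Z where "Z = r2\<^sup>2+r3\<^sup>2-2*r2*r3*cos (\<alpha>-\<beta>)"
  define u where "u = r2 * cos \<alpha> + r3 * cos \<beta>"
  have ap: "a > 0" using assms a_def by simp
  have "X = (r2-r1)^2 + 2*(r1*r2*(1-cos \<alpha>))" unfolding X_def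
    by (simp add: algebra_simps power2_eq_square)
  moreover have "r1*r2*(1-cos \<alpha>) \<ge> 0" using assms by simp
  moreover have "(r2-r1)^2 > 0" using assms by simp
  ultimately have Xp: "X > 0" by linarith
  have "Y = (r3-r1)^2 + 2*(r1*r3*(1-cos \<beta>))" unfolding Y_def
    by (simp add: algebra_simps power2_eq_square)
  moreover have "r1*r3*(1-cos \<beta>) \<ge> 0" using assms by simp
  moreover have "(r3-r1)^2 > 0" using assms by simp
  ultimately have Yp: "Y > 0" by linarith
  have Zeq: "Z = (r3-r2)^2 + 2*(r2*r3*(1-cos (\<alpha>-\<beta>)))" unfolding Z_def
    by (simp add: algebra_simps power2_eq_square)
  moreover have "r2*r3*(1-cos (\<alpha>-\<beta>)) \<ge> 0" using assms by simp
  moreover have "(r3-r2)^2 > 0" using assms by simp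
  ultimately have Zp: "Z > 0" by linarith
  have hX: "(3*a^2 - X)/(2*a^3) \<le> 1/sqrt X"
    using tangent_inv[of "sqrt X" a] Xp ap by simp
  have hY: "(3*a^2 - Y)/(2*a^3) \<le> 1/sqrt Y"
    using tangent_inv[of "sqrt Y" a] Yp ap by simp
  have XY: "X + Y = 2*r1^2 + r2^2 + r3^2 - 2*(r1*u)"
    unfolding X_def Y_def u_def by (simp add: algebra_simps power2_eq_square)
  have uW: "u^2 \<le> 2*r2^2 + 2*r3^2 - Z"
  proof -
    have "2*r2^2 + 2*r3^2 - Z - u^2 = (r2 * sin \<alpha> + r3 * sin \<beta>)^2"
    proof -
      have "2*r2^2 + 2*r3^2 - Z - u^2 = r2^2*(1 - (cos \<alpha>)^2) + r3^2*(1-(cos \<beta>)^2)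
              + 2*r2*r3*(sin \<alpha> * sin \<beta>)"
        unfolding Z_def u_def cos_diff by (simp add: algebra_simps power2_eq_square)
      also have "\<dots> = (r2 * sin \<alpha> + r3 * sin \<beta>)^2"
      proof -
        have "(r2 * sin \<alpha> + r3 * sin \<beta>)^2 = r2^2*(sin \<alpha>)^2 + r3^2*(sin \<beta>)^2
              + 2*r2*r3*(sin \<alpha> * sin \<beta>)" by algebra
        then show ?thesis by (simp add: sin_squared_eq)
      qed
      finally show ?thesis .
    qed
    then show ?thesis by (metis diff_ge_0_iff_ge zero_le_power2)
  qed
  have sum_le: "(6*a^2 - (X+Y))/(2*a^3) \<le> 1/sqrt X + 1/sqrt Y"
  proof -
    have "(6*a^2 - (X+Y))/(2*a^3) = (3*a^2 - X)/(2*a^3) + (3*a^2 - Y)/(2*a^3)"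
      by (simp add: add_divide_distrib[symmetric])
    then show ?thesis using hX hY by linarith
  qed
  have r2sq: "r2^2 < (a-e)^2" using assms a_def by (intro power_strict_mono) auto
  have r3sq: "r3^2 < a^2" using assms a_def by (intro power_strict_mono) auto
  show ?thesis
  proof (cases "Z \<ge> 3*a^2 - a*e")
    case True
    have "u^2 \<le> (a - 3/2*e)^2"
    proof -
      have "u^2 \<le> 2*(a-e)^2 + 2*a^2 - (3*a^2 - a*e)" using uW True r2sq r3sq by linarith
      also have "\<dots> \<le> (a - 3/2*e)^2" by (simp add: algebra_simps power2_eq_square)
      finally show ?thesis .
    qed
    moreover have "a - 3/2*e \<ge> 0" using assms a_def by simp
    ultimately have ub: "u \<ge> -(a - 3/2*e)"
      using abs_le_square_iff[of u "a - 3/2*e"] by (simp add: abs_le_iff)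
    have "r1*u \<ge> r1 * (-(a - 3/2*e))" using ub assms by (intro mult_left_mono) auto
    moreover have "r1*(r1 + (a - 3/2*e)) \<le> e*(a - 1/2*e)"
      using assms a_def by (intro mult_mono) auto
    ultimately have "X + Y \<le> 2*a^2" using XY r2sq r3sq
      by (simp add: algebra_simps power2_eq_square)
    then have "(4*a^2)/(2*a^3) \<le> (6*a^2 - (X+Y))/(2*a^3)" using ap
      by (intro divide_right_mono) auto
    moreover have "(4*a^2)/(2*a^3) = 2/a" using ap by (simp add: power2_eq_square power3_eq_cube)
    ultimately have h1: "2/a \<le> 1/sqrt X + 1/sqrt Y"
      using sum_le by linarith
    have "Z = (r2+r3)^2 - 2*(r2*r3*(1+cos (\<alpha>-\<beta>)))" unfolding Z_def
      by (simp add: algebra_simps power2_eq_square)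
    moreover have "1+cos (\<alpha>-\<beta>) \<ge> 0" using cos_ge_minus_one[of "\<alpha>-\<beta>"] by linarith
    then have "r2*r3*(1+cos (\<alpha>-\<beta>)) \<ge> 0" using assms by simp
    ultimately have "Z \<le> (r2+r3)^2" by linarith
    then have "sqrt Z \<le> r2 + r3" using assms real_sqrt_le_iff[of Z "(r2+r3)^2"] by simp
    then have "1/(2*S+e) \<le> 1/sqrt Z" using Zp assms
      by (intro divide_left_mono) auto
    then show ?thesis using h1 unfolding X_def Y_def Z_def a_def by linarith
  next
    case False
    have "r2 * cos \<alpha> \<ge> r2 * (-1)" using assms by (intro mult_left_mono) auto
    moreover have "r3 * cos \<beta> \<ge> r3 * (-1)" using assms by (intro mult_left_mono) auto
    ultimately have "u \<ge> -(r2+r3)" unfolding u_def by simp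
    then have "r1*u \<ge> r1*(-(r2+r3))" using assms by (intro mult_left_mono) auto
    moreover have "(r1+r2)^2 \<le> a^2" using assms a_def by (intro power_mono) auto
    moreover have "(r1+r3)^2 \<le> (a+e)^2" using assms a_def by (intro power_mono) auto
    ultimately have "X + Y \<le> 2*a^2 + 2*a*e + e^2" using XY
      by (simp add: algebra_simps power2_eq_square)
    then have h1: "(4*a^2 - 2*a*e - e^2)/(2*a^3) \<le> 1/sqrt X + 1/sqrt Y"
      using sum_le ap by (smt (verit) divide_right_mono zero_le_power)
    have "a*e > 0" using ap assms by simp
    then have "sqrt Z \<le> sqrt (3*a^2)" using False by simp
    also have "\<dots> = sqrt 3 * a" using ap by (simp add: real_sqrt_mult)
    also have "\<dots> \<le> 1.7321 * a" using sqrt3_bounds ap by simp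
    finally have "1/(1.7321*a) \<le> 1/sqrt Z" using Zp ap
      by (intro divide_left_mono) auto
    moreover have "2/a + 1/(2*S+e) \<le> (4*a^2 - 2*a*e - e^2)/(2*a^3) + 1/(1.7321*a)"
    proof -
      have e20: "20*e < a" using assms a_def by simp
      have "1/(2*S+e) \<le> 20/(39*a)" using e20 assms unfolding a_def
        by (simp add: field_simps)
      moreover have "(4*a^2 - 2*a*e - e^2)/(2*a^3) = 2/a - (2*a*e+e^2)/(2*a^3)"
        using ap by (simp add: field_simps power2_eq_square power3_eq_cube)
      moreover have "(2*a*e+e^2)/(2*a^3) \<le> 0.05125/a"
      proof -
        have ee: "e*e \<le> e*(a/20)" using e20 assms by (intro mult_left_mono) auto
        have ea: "e*(a/20) \<le> (a/20)*(a/20)" using e20 assms by (intro mult_right_mono) auto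
        have ae: "a*e \<le> a*(a/20)" using e20 ap by (intro mult_left_mono) auto
        have "2*(a*e)+e*e \<le> 0.1025*(a*a)" using ee ea ae by (simp add: algebra_simps)
        then have "2*a*e+e^2 \<le> 0.1025*a^2" by (simp add: power2_eq_square mult.assoc)
        then have "(2*a*e+e^2)/(2*a^3) \<le> (0.1025*a^2)/(2*a^3)" using ap
          by (intro divide_right_mono) auto
        moreover have "(0.1025*a^2)/(2*a^3) = 0.05125/a" using ap
          by (simp add: field_simps power2_eq_square power3_eq_cube)
        ultimately show ?thesis by simp
      qed
      moreover have "1/(1.7321*a) \<ge> 0.577/a" using ap by (simp add: field_simps)
      moreover have "20/(39*a) + 0.05125/a \<le> 0.577/a" using ap by (simp add: field_simps)
      ultimately show ?thesis by linarith
    qed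
    ultimately show ?thesis using h1 unfolding X_def Y_def Z_def a_def by linarith
  qed
qed


lemma eps_bound:
  fixes s1 s2 \<epsilon> M :: real
  assumes "0 < s1" "s1 < s2"
    and "0 < \<epsilon>" "\<epsilon> < min s1 (s2 - s1)"
    and "M > \<epsilon>"
    and h: "2 / (s2 + \<epsilon>) + 1 / (2 * s2 + \<epsilon>) + 1 / (2 * s1 + \<epsilon>)
           > sqrt 3 / (s1 - \<epsilon>) + 1 / s1 + 1 / (M - \<epsilon>)"
  shows "19 * \<epsilon> < s2"
proof (rule ccontr)
  assume "\<not> 19 * \<epsilon> < s2"
  then have c: "s2 \<le> 19 * \<epsilon>" by simp
  have s2p: "s2 > 0" using assms by simp
  have f1: "2 / (s2 + \<epsilon>) \<le> 1.9 * (1/s2)" using c s2p assms by (simp add: field_simps)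
  have f2: "1 / (2 * s2 + \<epsilon>) \<le> (19/39) * (1/s2)" using c s2p assms by (simp add: field_simps)
  have f3: "1 / (2 * s1 + \<epsilon>) \<le> 1/2 * (1/s1)" using assms by (simp add: field_simps)
  have p: "0 < s1 - \<epsilon>" "s1 - \<epsilon> \<le> 17/19 * s2" using assms c by auto
  have "1.732 * (19/17) * (1/s2) = 1.732 / (17/19 * s2)" by (simp add: field_simps)
  also have "\<dots> \<le> 1.732 / (s1 - \<epsilon>)" using p by (intro divide_left_mono) auto
  also have "\<dots> \<le> sqrt 3 / (s1 - \<epsilon>)" using p sqrt3_bounds by (intro divide_right_mono) auto
  finally have f4': "1.732 * (19/17) * (1/s2) \<le> sqrt 3 / (s1 - \<epsilon>)" .
  have "1.93 * (1/s2) \<le> 1.732 * (19/17) * (1/s2)" using s2p by (intro mult_right_mono) auto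
  then have f4: "1.93 * (1/s2) \<le> sqrt 3 / (s1 - \<epsilon>)" using f4' by linarith
  have f2': "(19/39) * (1/s2) \<le> 0.49 * (1/s2)" using s2p by (intro mult_right_mono) auto
  have f5: "1 / (M - \<epsilon>) > 0" using assms by simp
  have f6: "1/s2 \<le> 1/s1" using assms by (intro divide_left_mono) auto
  have f7: "1/s2 > 0" using s2p by simp
  show False using h f1 f2 f2' f3 f4 f5 f6 f7 by linarith
qed


lemma q_lower: fixes a b \<theta> :: real assumes "0 \<le> a" "0 \<le> b"
  shows "(a-b)^2 \<le> a\<^sup>2 + b\<^sup>2 - 2*a*b*cos \<theta>"
proof -
  have "a\<^sup>2 + b\<^sup>2 - 2*a*b*cos \<theta> = (a-b)^2 + 2*(a*b*(1-cos \<theta>))"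
    by (simp add: algebra_simps power2_eq_square)
  moreover have "a*b*(1-cos \<theta>) \<ge> 0" using assms by simp
  ultimately show ?thesis by linarith
qed

lemma q_upper: fixes a b \<theta> :: real assumes "0 \<le> a" "0 \<le> b"
  shows "a\<^sup>2 + b\<^sup>2 - 2*a*b*cos \<theta> \<le> (a+b)^2"
proof -
  have "a\<^sup>2 + b\<^sup>2 - 2*a*b*cos \<theta> = (a+b)^2 - 2*(a*b*(1+cos \<theta>))"
    by (simp add: algebra_simps power2_eq_square)
  moreover have "1+cos \<theta> \<ge> 0" using cos_ge_minus_one[of \<theta>] by linarith
  then have "a*b*(1+cos \<theta>) \<ge> 0" using assms by simp
  ultimately show ?thesis by linarith
qed

lemma inv_dist_eq: fixes a b \<theta> :: real assumes "0 \<le> a" "0 \<le> b" "a \<noteq> b"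
  shows "inv_dist a b \<theta> = ereal (1/sqrt(a\<^sup>2+b\<^sup>2-2*a*b*cos \<theta>))"
proof -
  have "(a-b)^2 > 0" using assms by simp
  then have "a\<^sup>2+b\<^sup>2-2*a*b*cos \<theta> > 0" using q_lower[OF assms(1,2), of \<theta>] by linarith
  then show ?thesis unfolding inv_dist_def Let_def by simp
qed

lemma inv_dist_lb: fixes a b \<theta> :: real assumes "0 \<le> a" "0 \<le> b" "0 < a + b"
  shows "ereal (1/(a+b)) \<le> inv_dist a b \<theta>"
proof -
  define q where "q = a\<^sup>2+b\<^sup>2-2*a*b*cos \<theta>"
  have "q \<le> (a+b)^2" unfolding q_def by (rule q_upper[OF assms(1,2)])
  then have sq: "sqrt q \<le> a + b" using assms real_sqrt_le_iff[of q "(a+b)^2"] by simp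
  show ?thesis
  proof (cases "sqrt q = 0")
    case True then show ?thesis unfolding inv_dist_def Let_def q_def[symmetric] by simp
  next
    case False
    have "q \<ge> 0" unfolding q_def using q_lower[OF assms(1,2), of \<theta>] by (smt (verit) zero_le_power2)
    then have "sqrt q > 0" using False by simp
    then have "1/(a+b) \<le> 1/sqrt q" using sq assms by (intro divide_left_mono mult_pos_pos) auto
    then show ?thesis using False unfolding inv_dist_def Let_def q_def[symmetric] by simp
  qed
qed

lemma inv_dist_pi: fixes a b :: real assumes "0 \<le> a" "0 \<le> b" "0 < a + b"
  shows "inv_dist a b pi = ereal (1/(a+b))"
proof -
  have "a\<^sup>2+b\<^sup>2-2*a*b*cos pi = (a+b)^2" by (simp add: power2_eq_square algebra_simps)
  then show ?thesis using assms unfolding inv_dist_def Let_def by simp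
qed

lemma inv_dist_zero: fixes a b :: real assumes "a < b"
  shows "inv_dist a b 0 = ereal (1/(b-a))"
proof -
  have "a\<^sup>2+b\<^sup>2-2*a*b*cos 0 = (b-a)^2" by (simp add: power2_eq_square algebra_simps)
  then show ?thesis using assms unfolding inv_dist_def Let_def by simp
qed

lemma inv_dist_120: fixes a b m \<theta> :: real assumes "0 < m" "m \<le> a" "m \<le> b" "cos \<theta> = -1/2"
  shows "inv_dist a b \<theta> \<le> ereal (1/(sqrt 3 * m))"
proof -
  define q where "q = a\<^sup>2+b\<^sup>2-2*a*b*cos \<theta>"
  have qe: "q = a*a + b*b + a*b" unfolding q_def assms(4) by (simp add: power2_eq_square)
  have "m*m \<le> a*a" "m*m \<le> b*b" "m*m \<le> a*b" using assms by (auto intro: mult_mono)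
  then have "3*m^2 \<le> q" unfolding qe by (simp add: power2_eq_square)
  then have "sqrt (3*m^2) \<le> sqrt q" by simp
  moreover have "sqrt (3*m^2) = sqrt 3 * m" using assms by (simp add: real_sqrt_mult)
  ultimately have h: "sqrt 3 * m \<le> sqrt q" by simp
  have p: "sqrt 3 * m > 0" using assms by simp
  then have "sqrt q \<noteq> 0" using h by linarith
  have sqp: "sqrt q > 0" using h p by linarith
  moreover have "1/sqrt q \<le> 1/(sqrt 3 * m)" using h p sqp assms(1) by (intro divide_left_mono mult_pos_pos) auto
  ultimately show ?thesis unfolding inv_dist_def Let_def q_def[symmetric] by simp
qed

lemma cos_240: "cos (4*pi/3) = -1/2"
proof -
  have "cos (4*pi/3) = cos (2*pi/3 + 2*pi/3)" by simp
  also have "\<dots> = cos (2*pi/3) * cos (2*pi/3) - sin (2*pi/3) * sin (2*pi/3)"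
    by (rule cos_add)
  also have "\<dots> = cos (2*pi/3)^2 - sin (2*pi/3)^2" by (simp add: power2_eq_square)
  also have "\<dots> = 2*cos (2*pi/3)^2 - 1" by (simp add: sin_squared_eq)
  finally show ?thesis by (simp add: cos_120 power2_eq_square)
qed

lemma rcost_le: "rcost a b c \<le> Ccost a b c \<alpha> \<beta>"
  unfolding rcost_def using INF_lower[of "(\<alpha>,\<beta>)" UNIV "\<lambda>p. Ccost a b c (fst p) (snd p)"] by simp

theorem lemma3p3:
  fixes s1 s2 \<epsilon> M r1 r2 r3 l1 l2 l3 :: real
  assumes "0 < s1" "s1 < s2"
    and "0 < \<epsilon>" "\<epsilon> < min s1 (s2 - s1)"
    and "M > \<epsilon>"
    and "2 / (s2 + \<epsilon>) + 1 / (2 * s2 + \<epsilon>) + 1 / (2 * s1 + \<epsilon>)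
           > sqrt 3 / (s1 - \<epsilon>) + 1 / s1 + 1 / (M - \<epsilon>)"
    and "0 < r1" "r1 < \<epsilon>"
    and "s2 - \<epsilon> < r2" "r2 < s2"
    and "s2 < r3" "r3 < s2 + \<epsilon>"
    and "s1 - \<epsilon> < l1" "l1 < s1"
    and "s1 < l2" "l2 < s1 + \<epsilon>"
    and "M < l3"
    and "r3 \<ge> phi r1 r2"
    and "l3 \<ge> phi l1 l2"
  shows "rcost r1 r2 r3 + rcost l1 l2 l3 > rcost l1 r2 r3 + rcost r1 l2 l3"
proof -
  have e19: "19 * \<epsilon> < s2" using eps_bound[OF assms(1-6)] .
  define TA where "TA = 2 / (s2 + \<epsilon>) + 1 / (2 * s2 + \<epsilon>)"
  define TB where "TB = 1/(l1+l2) + 1/(l1+l3) + 1/(l2+l3)"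
  define TC where "TC = sqrt 3 / (s1 - \<epsilon>)"
  define TD where "TD = 1/(r1+l2) + 1/(l3-r1) + 1/(l2+l3)"
  have A: "ereal TA \<le> rcost r1 r2 r3"
    unfolding rcost_def
  proof (rule INF_greatest)
    fix p :: "real \<times> real"
    obtain \<alpha> \<beta> where p: "p = (\<alpha>, \<beta>)" by (cases p)
    have "Ccost r1 r2 r3 \<alpha> \<beta> = ereal (1/sqrt(r1\<^sup>2+r2\<^sup>2-2*r1*r2*cos \<alpha>)
      + 1/sqrt(r1\<^sup>2+r3\<^sup>2-2*r1*r3*cos \<beta>) + 1/sqrt(r2\<^sup>2+r3\<^sup>2-2*r2*r3*cos (\<alpha>-\<beta>)))"
      unfolding Ccost_def using assms
      by (subst inv_dist_eq, simp, simp, simp)+ simp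
    moreover have "TA \<le> 1/sqrt(r1\<^sup>2+r2\<^sup>2-2*r1*r2*cos \<alpha>)
      + 1/sqrt(r1\<^sup>2+r3\<^sup>2-2*r1*r3*cos \<beta>) + 1/sqrt(r2\<^sup>2+r3\<^sup>2-2*r2*r3*cos (\<alpha>-\<beta>))"
      unfolding TA_def using assms e19 by (intro core) auto
    ultimately show "ereal TA \<le> Ccost r1 r2 r3 (fst p) (snd p)" using p by simp
  qed
  have B: "ereal TB \<le> rcost l1 l2 l3"
    unfolding rcost_def
  proof (rule INF_greatest)
    fix p :: "real \<times> real"
    have pos: "0 < l1" "0 < l2" "0 < l3" using assms by auto
    have "ereal (1/(l1+l2)) + ereal (1/(l1+l3)) + ereal (1/(l2+l3))
          \<le> Ccost l1 l2 l3 (fst p) (snd p)"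
      unfolding Ccost_def using pos
      by (intro add_mono inv_dist_lb) auto
    then show "ereal TB \<le> Ccost l1 l2 l3 (fst p) (snd p)" unfolding TB_def by simp
  qed
  have C: "rcost l1 r2 r3 \<le> ereal TC"
  proof -
    have m: "0 < s1 - \<epsilon>" "s1 - \<epsilon> \<le> l1" "s1 - \<epsilon> \<le> r2" "s1 - \<epsilon> \<le> r3" using assms by auto
    have "Ccost l1 r2 r3 (2*pi/3) (-(2*pi/3)) \<le> ereal (1/(sqrt 3 * (s1-\<epsilon>)))
       + ereal (1/(sqrt 3 * (s1-\<epsilon>))) + ereal (1/(sqrt 3 * (s1-\<epsilon>)))"
      unfolding Ccost_def using m
      by (intro add_mono inv_dist_120) (auto simp: cos_120 cos_240)
    also have "\<dots> = ereal (3 * (1/(sqrt 3 * (s1-\<epsilon>))))" by simp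
    also have "3 * (1/(sqrt 3 * (s1-\<epsilon>))) = TC"
    proof -
      have "3 = sqrt 3 * sqrt 3" by simp
      then have "3 * (1/(sqrt 3 * (s1-\<epsilon>))) = (sqrt 3 * sqrt 3) / (sqrt 3 * (s1-\<epsilon>))" by simp
      also have "\<dots> = TC" unfolding TC_def by (rule mult_divide_mult_cancel_left) simp
      finally show ?thesis .
    qed
    finally show ?thesis using rcost_le order_trans by blast
  qed
  have D: "rcost r1 l2 l3 \<le> ereal TD"
  proof -
    have "Ccost r1 l2 l3 pi 0 = ereal TD"
      unfolding Ccost_def TD_def using assms
      by (simp add: inv_dist_pi inv_dist_zero)
    then show ?thesis using rcost_le by metis
  qed
  have real: "TC + TD < TA + TB"
  proof -
    have "1/(2 * s1+\<epsilon>) < 1/(l1+l2)" using assms by (intro divide_strict_left_mono) auto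
    moreover have "1/(r1+l2) < 1/s1" using assms by (intro divide_strict_left_mono) auto
    moreover have "1/(l3-r1) < 1/(M-\<epsilon>)" using assms by (intro divide_strict_left_mono) auto
    moreover have "1/(l1+l3) > 0" using assms by simp
    ultimately show ?thesis using assms(6) unfolding TA_def TB_def TC_def TD_def by linarith
  qed
  have "rcost l1 r2 r3 + rcost r1 l2 l3 \<le> ereal TC + ereal TD" using C D by (rule add_mono)
  also have "\<dots> < ereal TA + ereal TB" using real by simp
  also have "\<dots> \<le> rcost r1 r2 r3 + rcost l1 l2 l3" using A B by (rule add_mono)
  finally show ?thesis .
qed

end
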